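(* Let $\mathbf{f}=(\mathbf{f}_0,\dots,\mathbf{f}_{k-1})$ be uniform in $\mathcal{F}(n,k)$ (assumed nonempty), let $\mathbf{u}$ be a node chosen uniformly among all $n$ nodes of $\mathbf{f}$, let $\mathbf{i}$ be the index of the tree containing $\mathbf{u}$, and let $R_{\mathbf{u}}(\mathbf{f})=((\mathbf{f}_{\mathbf{i}},\mathbf{u}),\mathbf{f}_{\mathbf{i}+1\bmod k},\dots,\mathbf{f}_{\mathbf{i}+k-1\bmod k})$. Then $R_{\mathbf{u}}(\mathbf{f})$ is uniformly distributed on $\mathcal{F}^\bullet(n,k)$. Consequently, the decreasingly sorted tree-size vector of a uniform element of $\mathcal{F}(n,k)$ has the same distribution as that of a uniform element of $\mathcal{F}^\bullet(n,k)$.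
   Context: $\mathcal{F}(n,k)$ is the set of sequences $(f_0,\dots,f_{k-1})$ of $k$ rooted plane complete binary trees (every node has $0$ or $2$ ordered children) with $n$ nodes in total. $\mathcal{F}^\bullet(n,k)$ is the set of $((f_0,v),f_1,\dots,f_{k-1})$ with $(f_0,\dots,f_{k-1})\in\mathcal{F}(n,k)$ and $v$ a node of $f_0$. The tree-size vector of a forest is $(|f_0|,\dots,|f_{k-1}|)$, $|f_i|$ being the number of nodes of $f_i$. *)

theory Defs
  imports "HOL-Probability.Probability_Mass_Function"
begin

datatype cbtree = Leaf | Node cbtree cbtree

fun tsize :: "cbtree \<Rightarrow> nat" where
  "tsize Leaf = 1"
| "tsize (Node l r) = 1 + tsize l + tsize r"

fun tnodes :: "cbtree \<Rightarrow> bool list set" where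
  "tnodes Leaf = {[]}"
| "tnodes (Node l r) = insert [] ((Cons False) ` tnodes l \<union> (Cons True) ` tnodes r)"

definition forests :: "nat \<Rightarrow> nat \<Rightarrow> cbtree list set" where
  "forests n k = {f. length f = k \<and> (\<Sum>t\<leftarrow>f. tsize t) = n}"

text \<open>Fbullet(n,k): ((f0,v), [f1,...,f(k-1)]) with (f0,...,f(k-1)) in F(n,k) and v a node of f0.\<close>
definition pforests :: "nat \<Rightarrow> nat \<Rightarrow> ((cbtree \<times> bool list) \<times> cbtree list) set" where
  "pforests n k = {((t, v), ts). t # ts \<in> forests n k \<and> v \<in> tnodes t}"

definition fnodes :: "cbtree list \<Rightarrow> (nat \<times> bool list) set" where
  "fnodes f = {(i, v). i < length f \<and> v \<in> tnodes (f ! i)}"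

definition rotate_at :: "nat \<times> bool list \<Rightarrow> cbtree list \<Rightarrow> (cbtree \<times> bool list) \<times> cbtree list" where
  "rotate_at u f = (let i = fst u; k = length f in
     ((f ! i, snd u), map (\<lambda>j. f ! ((i + j) mod k)) [1..<k]))"

definition sorted_sizes :: "cbtree list \<Rightarrow> nat list" where
  "sorted_sizes f = rev (sort (map tsize f))"

definition psorted_sizes :: "(cbtree \<times> bool list) \<times> cbtree list \<Rightarrow> nat list" where
  "psorted_sizes p = sorted_sizes (fst (fst p) # snd p)"

end

theory Submission imports Defs begin

lemma tnodes_fin_card: "finite (tnodes t) \<and> card (tnodes t) = tsize t"
proof (induction t)
  case Leaf then show ?case by simp
next
  case (Node l r)
  have d: "Cons False ` tnodes l \<inter> Cons True ` tnodes r = {}" by auto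
  have "card (Cons False ` tnodes l \<union> Cons True ` tnodes r) = tsize l + tsize r"
    using Node d by (simp add: card_Un_disjoint card_image)
  then show ?case using Node by (auto simp: card_insert_if)
qed

lemma tsize_pos: "tsize t > 0" by (cases t) auto

lemma tsize_ne0: "tsize t \<noteq> 0" by (cases t) auto

lemma finite_trees: "finite {t. tsize t \<le> m}"
proof (induction m)
  case 0
  have "{t. tsize t \<le> 0} = {}" by (simp add: tsize_ne0)
  then show ?case by (simp only: finite.emptyI)
next
  case (Suc m)
  let ?A = "{t. tsize t \<le> m}"
  have sub: "{t. tsize t \<le> Suc m} \<subseteq> insert Leaf ((\<lambda>(l,r). Node l r) ` (?A \<times> ?A))"
  proof
    fix t assume t: "t \<in> {t. tsize t \<le> Suc m}"
    show "t \<in> insert Leaf ((\<lambda>(l,r). Node l r) ` (?A \<times> ?A))"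
    proof (cases t)
      case Leaf then show ?thesis by simp
    next
      case (Node l r)
      then have lr: "(l,r) \<in> ?A \<times> ?A" using t by simp
      have "t \<in> (\<lambda>(l,r). Node l r) ` (?A \<times> ?A)"
        unfolding Node by (rule image_eqI[where x="(l,r)"]) (simp_all only: lr case_prod_conv)
      then show ?thesis by (rule insertI2)
    qed
  qed
  have "finite (insert Leaf ((\<lambda>(l,r). Node l r) ` (?A \<times> ?A)))"
    using Suc.IH by simp
  then show ?case by (rule finite_subset[OF sub])
qed

lemma finite_forests: "finite (forests n k)"
proof -
  have sub: "forests n k \<subseteq> {xs. set xs \<subseteq> {t. tsize t \<le> n} \<and> length xs = k}"
  proof
    fix f assume f: "f \<in> forests n k"
    have "\<forall>t\<in>set f. tsize t \<le> n"
    proof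
      fix t assume "t \<in> set f"
      then have "tsize t \<le> sum_list (map tsize f)" by (simp add: member_le_sum_list)
      then show "tsize t \<le> n" using f by (simp add: forests_def)
    qed
    then show "f \<in> {xs. set xs \<subseteq> {t. tsize t \<le> n} \<and> length xs = k}" using f
      by (auto simp: forests_def)
  qed
  show ?thesis by (rule finite_subset[OF sub finite_lists_length_eq[OF finite_trees]])
qed

lemma fnodes_Sigma: "fnodes f = Sigma {..<length f} (\<lambda>i. tnodes (f!i))"
  by (auto simp: fnodes_def)

lemma card_fnodes: "finite (fnodes f) \<and> card (fnodes f) = sum_list (map tsize f)"
proof -
  have "card (fnodes f) = (\<Sum>i<length f. tsize (f!i))"
    unfolding fnodes_Sigma by (subst card_SigmaI) (auto simp: tnodes_fin_card)
  also have "\<dots> = sum_list (map tsize f)"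
    by (simp add: sum_list_sum_nth lessThan_atLeast0)
  finally show ?thesis unfolding fnodes_Sigma by (simp add: tnodes_fin_card)
qed

lemma mset_rotate: "mset (rotate m xs) = mset xs"
proof -
  let ?n = "m mod length xs"
  have "mset (drop ?n xs @ take ?n xs) = mset (take ?n xs @ drop ?n xs)"
    by (simp only: mset_append add.commute)
  also have "\<dots> = mset xs" by (simp only: append_take_drop_id)
  finally show ?thesis by (simp only: rotate_drop_take)
qed

lemma sum_rotate:
  fixes g :: "'a \<Rightarrow> 'b::comm_monoid_add"
  shows "sum_list (map g (rotate m xs)) = sum_list (map g xs)"
proof -
  have "mset (map g (rotate m xs)) = mset (map g xs)" by (simp add: mset_rotate)
  then have "sum_mset (mset (map g (rotate m xs))) = sum_mset (mset (map g xs))" by (rule arg_cong)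
  then show ?thesis by (simp only: sum_mset_sum_list)
qed

lemma rotate_at_eq:
  assumes "i < length f"
  shows "rotate_at (i,v) f = ((hd (rotate i f), v), tl (rotate i f))"
proof -
  let ?k = "length f"
  have r: "rotate i f = map (\<lambda>j. f!((i+j) mod ?k)) [0..<?k]"
    by (rule nth_equalityI) (simp_all add: nth_rotate)
  have u: "[0..<?k] = 0 # [1..<?k]" using assms by (subst upt_rec) auto
  show ?thesis unfolding rotate_at_def Let_def using assms by (simp add: r u)
qed

lemma psorted_rotate:
  assumes "i < length f"
  shows "psorted_sizes (rotate_at (i,v) f) = sorted_sizes f"
proof -
  have ne: "rotate i f \<noteq> []" using assms by auto
  have "psorted_sizes (rotate_at (i,v) f) = sorted_sizes (rotate i f)"
    using assms ne by (simp add: rotate_at_eq psorted_sizes_def)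
  also have "\<dots> = sorted_sizes f"
  proof -
    have "sort (map tsize (rotate i f)) = sort (map tsize f)"
      by (rule properties_for_sort) (simp_all add: mset_rotate)
    then show ?thesis by (simp add: sorted_sizes_def)
  qed
  finally show ?thesis .
qed


theorem mainTheorem13:
  fixes n k :: nat
  assumes "forests n k \<noteq> {}" and "n \<ge> 1"
  shows "bind_pmf (pmf_of_set (forests n k))
           (\<lambda>f. map_pmf (\<lambda>u. rotate_at u f) (pmf_of_set (fnodes f)))
         = pmf_of_set (pforests n k)
         \<and> map_pmf sorted_sizes (pmf_of_set (forests n k))
         = map_pmf psorted_sizes (pmf_of_set (pforests n k))"
proof -
  define F where "F = forests n k"
  define P where "P = pforests n k"
  define S where "S = (\<Union>f\<in>F. Pair f ` fnodes f)"
  define G where "G = (\<lambda>x::cbtree list \<times> nat \<times> bool list. rotate_at (snd x) (fst x))"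
  define H where "H = (\<lambda>x::cbtree list \<times> nat \<times> bool list. (rotate_at (snd x) (fst x), fst (snd x)))"
  have finF: "finite F" "F \<noteq> {}" using assms(1) finite_forests unfolding F_def by auto
  have lenF: "length f = k" if "f \<in> F" for f using that by (simp add: F_def forests_def)
  have cardF: "finite (fnodes f) \<and> card (fnodes f) = n" if "f \<in> F" for f
    using that card_fnodes[of f] by (simp add: F_def forests_def)
  have k1: "k \<ge> 1"
  proof (rule ccontr)
    assume "\<not> k \<ge> 1"
    then have "k = 0" by simp
    obtain f where "f \<in> F" using finF by auto
    then have "f = []" "sum_list (map tsize f) = n" using \<open>k = 0\<close> by (auto simp: F_def forests_def)
    then show False using assms by simp
  qed
  have "0 \<in> {..<k}" using k1 by simp
  then have Kne: "{..<k} \<noteq> {}" by blast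
  have ne_nodes: "fnodes f \<noteq> {}" if "f \<in> F" for f
  proof
    assume "fnodes f = {}"
    then show False using cardF[OF that] assms(2) by simp
  qed
  have finS: "finite S" unfolding S_def
    by (intro finite_UN_I finF(1) finite_imageI) (use cardF in blast)
  have neS: "S \<noteq> {}"
  proof -
    obtain f where f: "f \<in> F" using finF(2) by blast
    obtain u where u: "u \<in> fnodes f" using ne_nodes[OF f] by blast
    have "(f,u) \<in> S" unfolding S_def using f u by blast
    then show ?thesis by blast
  qed
  have cP: "card (Pair f ` fnodes f) = n" if "f \<in> F" for f
    using cardF[OF that] by (subst card_image) (auto simp: inj_on_def)
  have UN: "pmf_of_set S = bind_pmf (pmf_of_set F) (\<lambda>f. pmf_of_set (Pair f ` fnodes f))"
  proof -
    have d: "disjoint_family_on (\<lambda>f. Pair f ` fnodes f) F"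
      unfolding disjoint_family_on_def by blast
    have ne: "\<And>f. f \<in> F \<Longrightarrow> Pair f ` fnodes f \<noteq> {}" using ne_nodes by blast
    have f2: "finite (\<Union>f\<in>F. Pair f ` fnodes f)" using finS unfolding S_def .
    show ?thesis unfolding S_def
      by (rule pmf_of_set_UN[where n=n, OF f2 finF(2) ne cP d])
  qed
  have LHS: "bind_pmf (pmf_of_set F) (\<lambda>f. map_pmf (\<lambda>u. rotate_at u f) (pmf_of_set (fnodes f)))
       = map_pmf G (pmf_of_set S)"
  proof -
    have "bind_pmf (pmf_of_set F) (\<lambda>f. map_pmf (\<lambda>u. rotate_at u f) (pmf_of_set (fnodes f)))
        = bind_pmf (pmf_of_set F) (\<lambda>f. map_pmf G (pmf_of_set (Pair f ` fnodes f)))"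
    proof (rule bind_pmf_cong[OF refl])
      fix f assume "f \<in> set_pmf (pmf_of_set F)"
      then have f: "f \<in> F" using finF by simp
      have "pmf_of_set (Pair f ` fnodes f) = map_pmf (Pair f) (pmf_of_set (fnodes f))"
        by (rule map_pmf_of_set_inj[symmetric]) (use cardF[OF f] ne_nodes[OF f] in \<open>auto simp: inj_on_def\<close>)
      then show "map_pmf (\<lambda>u. rotate_at u f) (pmf_of_set (fnodes f)) = map_pmf G (pmf_of_set (Pair f ` fnodes f))"
        by (simp add: map_pmf_comp G_def)
    qed
    also have "\<dots> = map_pmf G (pmf_of_set S)" by (simp add: UN map_bind_pmf)
    finally show ?thesis .
  qed
  have injH: "inj_on H S"
  proof (rule inj_onI)
    fix x y assume x: "x \<in> S" and y: "y \<in> S" and e: "H x = H y"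
    obtain f i v where xe: "x = (f,(i,v))" "f \<in> F" "(i,v) \<in> fnodes f" using x by (auto simp: S_def)
    obtain f' i' v' where ye: "y = (f',(i',v'))" "f' \<in> F" "(i',v') \<in> fnodes f'" using y by (auto simp: S_def)
    have il: "i < length f" "i' < length f'" using xe ye by (auto simp: fnodes_def)
    have ii: "i' = i" using e xe ye by (simp add: H_def)
    have e': "rotate_at (i,v) f = rotate_at (i,v') f'" using e xe(1) ye(1) ii by (simp add: H_def)
    have il2: "i < length f'" using il ii by simp
    have e2: "((hd (rotate i f), v), tl (rotate i f)) = ((hd (rotate i f'), v'), tl (rotate i f'))"
      using e' by (simp only: rotate_at_eq[OF il(1)] rotate_at_eq[OF il2])
    have eq: "hd (rotate i f) = hd (rotate i f')" "v = v'" "tl (rotate i f) = tl (rotate i f')"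
      using e2 by simp_all
    have "rotate i f = rotate i f'"
    proof -
      have ne: "rotate i f \<noteq> []" "rotate i f' \<noteq> []" using il il2 by auto
      have "rotate i f = hd (rotate i f) # tl (rotate i f)" using ne(1) by simp
      also have "\<dots> = hd (rotate i f') # tl (rotate i f')" using eq by simp
      also have "\<dots> = rotate i f'" using ne(2) by simp
      finally show ?thesis .
    qed
    then have "rotate (length f - i) (rotate i f) = rotate (length f - i) (rotate i f')" by simp
    moreover have "length f = k" "length f' = k" using lenF xe(2) ye(2) by auto
    ultimately have "rotate (length f - i + i) f = rotate (length f' - i + i) f'" by (simp add: rotate_rotate)
    moreover have "length f - i + i = length f" "length f' - i + i = length f'" using il il2 by auto
    ultimately have "f = f'" by simp
    then show "x = y" using xe ye ii eq by simp
  qed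
  have imH: "H ` S = P \<times> {..<k}"
  proof
    show "H ` S \<subseteq> P \<times> {..<k}"
    proof
      fix z assume "z \<in> H ` S"
      then obtain f i v where z: "z = H (f,(i,v))" "f \<in> F" "(i,v) \<in> fnodes f" by (auto simp: S_def)
      have il: "i < length f" and vn: "v \<in> tnodes (f!i)" using z by (auto simp: fnodes_def)
      let ?r = "rotate i f"
      have rne: "?r \<noteq> []" using il by auto
      have hr: "hd ?r = f!i" using il by (subst hd_rotate_conv_nth) auto
      have "hd ?r # tl ?r = ?r" using rne by simp
      then have inF: "hd ?r # tl ?r \<in> forests n k" using z(2) by (simp add: F_def forests_def sum_rotate)
      have vn2: "v \<in> tnodes (hd ?r)" using hr vn by simp
      have ik: "i < k" using il lenF[OF z(2)] by simp
      have Hz: "z = (((hd ?r, v), tl ?r), i)" using z(1) il by (simp add: H_def rotate_at_eq)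
      have "((hd ?r, v), tl ?r) \<in> P" unfolding P_def pforests_def using inF vn2 by blast
      then show "z \<in> P \<times> {..<k}" using Hz ik by simp
    qed
  next
    show "P \<times> {..<k} \<subseteq> H ` S"
    proof
      fix z assume "z \<in> P \<times> {..<k}"
      then obtain t v ts i where z: "z = (((t,v),ts),i)" "t # ts \<in> F" "v \<in> tnodes t" "i < k"
        by (auto simp: P_def pforests_def F_def)
      have lk: "length (t#ts) = k" using lenF[OF z(2)] .
      define f where "f = rotate (k - i) (t#ts)"
      have rf: "rotate i f = t # ts" using z(4) lk by (simp add: f_def rotate_rotate)
      have fF: "f \<in> F" using z(2) lk by (simp add: f_def F_def forests_def sum_rotate)
      have lf: "length f = k" using lk by (simp add: f_def)
      have "hd (rotate i f) = f ! i" using z(4) lf by (subst hd_rotate_conv_nth) auto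
      then have fi: "f ! i = t" using rf by simp
      have mS: "(f,(i,v)) \<in> S" using fF fi z(3,4) lf by (auto simp: S_def fnodes_def)
      have Hz2: "H (f,(i,v)) = z" using rf z(4) lf by (simp add: H_def rotate_at_eq z(1))
      show "z \<in> H ` S" unfolding Hz2[symmetric] using mS by (rule imageI)
    qed
  qed
  have finP: "finite P" "P \<noteq> {}"
  proof -
    have "0 \<in> {..<k}" using k1 by simp
    then have "{..<k} \<noteq> {}" by blast
    then have "P = fst ` (P \<times> {..<k})" by (simp add: fst_image_times)
    also have "\<dots> = fst ` H ` S" by (simp add: imH)
    finally show "finite P" "P \<noteq> {}" using finS neS by auto
  qed
  have GH: "G = fst \<circ> H" by (simp add: G_def H_def fun_eq_iff)
  have mapH: "map_pmf H (pmf_of_set S) = pmf_of_set (P \<times> {..<k})"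
    using map_pmf_of_set_inj[OF injH neS finS] imH by simp
  have fstP: "map_pmf fst (pmf_of_set (P \<times> {..<k})) = pmf_of_set P"
  proof (rule pmf_eqI)
    fix a
    have "(P \<times> {..<k}) \<inter> fst -` {a} = (if a \<in> P then {a} \<times> {..<k} else {})" by auto
    moreover have ne2: "P \<times> {..<k} \<noteq> {}" "finite (P \<times> {..<k})" using finP Kne by auto
    moreover have "pmf (map_pmf fst (pmf_of_set (P \<times> {..<k}))) a
       = card ((P \<times> {..<k}) \<inter> fst -` {a}) / card (P \<times> {..<k})"
      by (simp add: pmf_map measure_pmf_of_set[OF ne2])
    ultimately have "pmf (map_pmf fst (pmf_of_set (P \<times> {..<k}))) a
       = card (if a \<in> P then {a} \<times> {..<k} else {}) / card (P \<times> {..<k})" by simp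
    also have "\<dots> = (if a \<in> P then 1 / card P else 0)"
      using finP k1 by (simp add: card_cartesian_product)
    also have "\<dots> = pmf (pmf_of_set P) a" using finP by (simp add: indicator_def)
    finally show "pmf (map_pmf fst (pmf_of_set (P \<times> {..<k}))) a = pmf (pmf_of_set P) a" .
  qed
  have part1: "bind_pmf (pmf_of_set F) (\<lambda>f. map_pmf (\<lambda>u. rotate_at u f) (pmf_of_set (fnodes f)))
         = pmf_of_set P"
  proof -
    have "map_pmf G (pmf_of_set S) = map_pmf fst (map_pmf H (pmf_of_set S))"
      unfolding map_pmf_comp G_def H_def by simp
    also have "\<dots> = map_pmf fst (pmf_of_set (P \<times> {..<k}))" by (simp only: mapH)
    also have "\<dots> = pmf_of_set P" by (rule fstP)
    finally have GP: "map_pmf G (pmf_of_set S) = pmf_of_set P" .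
    show ?thesis by (rule trans[OF LHS GP])
  qed
  have part2: "map_pmf sorted_sizes (pmf_of_set F) = map_pmf psorted_sizes (pmf_of_set P)"
  proof -
    have "map_pmf psorted_sizes (pmf_of_set P) =
      bind_pmf (pmf_of_set F) (\<lambda>f. map_pmf (\<lambda>u. psorted_sizes (rotate_at u f)) (pmf_of_set (fnodes f)))"
      unfolding part1[symmetric] map_bind_pmf map_pmf_comp by (rule refl)
    also have "\<dots> = bind_pmf (pmf_of_set F) (\<lambda>f. return_pmf (sorted_sizes f))"
    proof (rule bind_pmf_cong[OF refl])
      fix f assume "f \<in> set_pmf (pmf_of_set F)"
      then have f: "f \<in> F" using finF by simp
      have "map_pmf (\<lambda>u. psorted_sizes (rotate_at u f)) (pmf_of_set (fnodes f))
          = map_pmf (\<lambda>u. sorted_sizes f) (pmf_of_set (fnodes f))"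
      proof (rule map_pmf_cong[OF refl])
        fix u assume "u \<in> set_pmf (pmf_of_set (fnodes f))"
        then have "u \<in> fnodes f" using cardF[OF f] ne_nodes[OF f] by simp
        then show "psorted_sizes (rotate_at u f) = sorted_sizes f"
          by (cases u) (simp add: fnodes_def psorted_rotate)
      qed
      then show "map_pmf (\<lambda>u. psorted_sizes (rotate_at u f)) (pmf_of_set (fnodes f)) = return_pmf (sorted_sizes f)"
        by (simp add: map_pmf_const)
    qed
    also have "\<dots> = map_pmf sorted_sizes (pmf_of_set F)" by (simp add: map_pmf_def)
    finally show ?thesis by simp
  qed
  show ?thesis using part1 part2 unfolding F_def P_def by (rule conjI)
qed

end
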